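(* Assume the standing assumptions (A1)–(A3). Then the optimal value of \[ (\overline{Aff})\quad\min_{x,\lambda,Y}\ c^Tx+\lambda\ \ \text{s.t.}\ \ x\in\mathcal X,\ \ \lambda g_1g_1^T-\tfrac12G(x)+\tfrac12H(Y)\in\mathrm{COP}(\widehat{\mathcal U}\times\mathbb R^m_+), \] with $\lambda\in\mathbb R$, $Y\in\mathbb R^{n_2\times k}$, equals $v^*_{Aff}$.
   Context: Data: $A\in\mathbb R^{m\times n_1}$, $B\in\mathbb R^{m\times n_2}$, $c\in\mathbb R^{n_1}$, $d\in\mathbb R^{n_2}$, $F\in\mathbb R^{m\times k}$, $\mathcal X\subseteq\mathbb R^{n_1}$ closed convex. $\widehat{\mathcal U}\subseteq\mathbb R_+\times\mathbb R^{k-1}$ is a closed, convex, full-dimensional cone and $\mathcal U:=\{u\in\widehat{\mathcal U}: u_1=1\}$, assumed nonempty and compact. $e_1\in\mathbb R^k$ first standard basis vector, $g_1:=(e_1;0)\in\mathbb R^{k+m}$. (RLP): $v^*_{RLP}:=\inf\{c^Tx+\sup_{u\in\mathcal U}d^Ty(u)\}$ over $x\in\mathcal X$ and maps $y:\mathcal U\to\mathbb R^{n_2}$ with $Ax+By(u)\ge Fu$ for all $u\in\mathcal U$. Standing assumptions: (A1) $\mathcal X,\widehat{\mathcal U}$ computationally tractable; (A2) (RLP) feasible; (A3) $v^*_{RLP}$ finite. The affine-policy value is $v^*_{Aff}:=\inf\{c^Tx+\sup_{u\in\mathcal U}d^TYu\}$ over $x\in\mathcal X$, $Y\in\mathbb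 R^{n_2\times k}$ with $Ax+BYu\ge Fu$ for all $u\in\mathcal U$. $G(x):=\begin{pmatrix}0&(F-Axe_1^T)^T\\ F-Axe_1^T&0\end{pmatrix}$, $H(Y):=\begin{pmatrix}-e_1d^TY-Y^Tde_1^T&(BY)^T\\ BY&0\end{pmatrix}$, both in $\mathcal S^{k+m}$. $\mathrm{COP}(\mathcal K):=\{M\in\mathcal S^n: z^TMz\ge0\ \forall z\in\mathcal K\}$ for a closed convex cone $\mathcal K\subseteq\mathbb R^n$. *)

theory Defs
  imports "HOL-Analysis.Analysis"
begin

definition outer :: "real^'m::finite \<Rightarrow> real^'n::finite \<Rightarrow> real^'n::finite^'m::finite" where
  "outer a b = (\<chi> i j. a $ i * b $ j)"

definition blockmat :: "real^'k::finite^'k::finite \<Rightarrow> real^'m::finite^'k::finite \<Rightarrow> real^'k::finite^'m::finite \<Rightarrow> real^'m::finite^'m::finite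
    \<Rightarrow> real^('k::finite + 'm::finite)^('k::finite + 'm::finite)" where
  "blockmat M11 M12 M21 M22 = (\<chi> r s. case r of
       Inl i \<Rightarrow> (case s of Inl j \<Rightarrow> M11 $ i $ j | Inr q \<Rightarrow> M12 $ i $ q)
     | Inr p \<Rightarrow> (case s of Inl j \<Rightarrow> M21 $ p $ j | Inr q \<Rightarrow> M22 $ p $ q))"

definition vjoin :: "real^'k::finite \<Rightarrow> real^'m::finite \<Rightarrow> real^('k::finite + 'm::finite)" where
  "vjoin u w = (\<chi> r. case r of Inl i \<Rightarrow> u $ i | Inr p \<Rightarrow> w $ p)"

text \<open>First standard basis vector; the "first" coordinate is a designated index i1.\<close>
definition e1 :: "'k::finite \<Rightarrow> real^'k::finite" where
  "e1 i1 = axis i1 1"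

definition g1 :: "'k::finite \<Rightarrow> real^('k::finite + 'm::finite)" where
  "g1 i1 = vjoin (e1 i1) 0"

definition COP :: "(real^'n::finite) set \<Rightarrow> (real^'n::finite^'n::finite) set" where
  "COP K = {M. transpose M = M \<and> (\<forall>z\<in>K. 0 \<le> z \<bullet> (M *v z))}"

definition cone_prod_nonneg :: "(real^'k::finite) set \<Rightarrow> (real^('k::finite + 'm::finite)) set" where
  "cone_prod_nonneg Uh = {vjoin u w | u w. u \<in> Uh \<and> (\<forall>p. 0 \<le> w $ p)}"

definition Uset :: "(real^'k::finite) set \<Rightarrow> 'k::finite \<Rightarrow> (real^'k::finite) set" where
  "Uset Uh i1 = {u \<in> Uh. u $ i1 = 1}"

definition Gmat :: "real^'n1::finite^'m::finite \<Rightarrow> real^'k::finite^'m::finite \<Rightarrow> 'k::finite \<Rightarrow> real^'n1::finite \<Rightarrow> real^('k::finite + 'm::finite)^('k::finite + 'm::finite)" where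
  "Gmat A F i1 x = blockmat 0 (transpose (F - outer (A *v x) (e1 i1))) (F - outer (A *v x) (e1 i1)) 0"

definition Hmat :: "real^'n2::finite^'m::finite \<Rightarrow> real^'n2::finite \<Rightarrow> 'k::finite \<Rightarrow> real^'k::finite^'n2::finite \<Rightarrow> real^('k::finite + 'm::finite)^('k::finite + 'm::finite)" where
  "Hmat B d i1 Y = blockmat (- outer (e1 i1) (d v* Y) - outer (transpose Y *v d) (e1 i1))
                            (transpose (B ** Y)) (B ** Y) 0"

definition v_RLP :: "real^'n1::finite^'m::finite \<Rightarrow> real^'n2::finite^'m::finite \<Rightarrow> real^'n1::finite \<Rightarrow> real^'n2::finite \<Rightarrow> real^'k::finite^'m::finite
    \<Rightarrow> (real^'n1::finite) set \<Rightarrow> (real^'k::finite) set \<Rightarrow> 'k::finite \<Rightarrow> ereal" where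
  "v_RLP A B c d F X Uh i1 =
     (INF xy \<in> {(x, y). x \<in> X \<and> (\<forall>u\<in>Uset Uh i1. \<forall>p. (F *v u) $ p \<le> (A *v x + B *v y u) $ p)}.
        ereal (c \<bullet> fst xy) + (SUP u \<in> Uset Uh i1. ereal (d \<bullet> snd xy u)))"

definition v_Aff :: "real^'n1::finite^'m::finite \<Rightarrow> real^'n2::finite^'m::finite \<Rightarrow> real^'n1::finite \<Rightarrow> real^'n2::finite \<Rightarrow> real^'k::finite^'m::finite
    \<Rightarrow> (real^'n1::finite) set \<Rightarrow> (real^'k::finite) set \<Rightarrow> 'k::finite \<Rightarrow> ereal" where
  "v_Aff A B c d F X Uh i1 =
     (INF xY \<in> {(x, Y). x \<in> X \<and> (\<forall>u\<in>Uset Uh i1. \<forall>p. (F *v u) $ p \<le> (A *v x + B *v (Y *v u)) $ p)}.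
        ereal (c \<bullet> fst xY) + (SUP u \<in> Uset Uh i1. ereal (d \<bullet> (snd xY *v u))))"

definition v_AffCOP :: "real^'n1::finite^'m::finite \<Rightarrow> real^'n2::finite^'m::finite \<Rightarrow> real^'n1::finite \<Rightarrow> real^'n2::finite \<Rightarrow> real^'k::finite^'m::finite
    \<Rightarrow> (real^'n1::finite) set \<Rightarrow> (real^'k::finite) set \<Rightarrow> 'k::finite \<Rightarrow> ereal" where
  "v_AffCOP A B c d F X Uh i1 =
     (INF xlY \<in> {(x, lam, Y). x \<in> X \<and>
          lam *\<^sub>R outer (g1 i1) (g1 i1) - (1/2) *\<^sub>R Gmat A F i1 x + (1/2) *\<^sub>R Hmat B d i1 Y
            \<in> COP (cone_prod_nonneg Uh)}.
        ereal (c \<bullet> fst xlY + fst (snd xlY)))"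

end

theory Submission
  imports Defs
begin

lemma inner_vjoin: "vjoin a b \<bullet> vjoin c d = a \<bullet> c + b \<bullet> d"
  unfolding inner_vec_def
  by (simp add: UNIV_Plus_UNIV[symmetric] sum.Plus del: UNIV_Plus_UNIV) (simp add: vjoin_def o_def)

lemma blockmat_mult: "blockmat P Q R S *v vjoin u w = vjoin (P *v u + Q *v w) (R *v u + S *v w)"
  unfolding vec_eq_iff
proof
  fix r show "(blockmat P Q R S *v vjoin u w) $ r = vjoin (P *v u + Q *v w) (R *v u + S *v w) $ r"
    unfolding matrix_vector_mult_def
    by (cases r) (simp_all add: UNIV_Plus_UNIV[symmetric] sum.Plus blockmat_def vjoin_def o_def del: UNIV_Plus_UNIV)
qed

lemma outer_mult: "outer a b *v z = (b \<bullet> z) *\<^sub>R a"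
  by (simp add: outer_def vec_eq_iff matrix_vector_mult_def inner_vec_def sum_distrib_left mult_ac)

lemma transp_dot: "u \<bullet> (transpose K *v (w::real^_)) = w \<bullet> (K *v u)"
  by (metis dot_lmul_matrix inner_commute transpose_matrix_vector)

lemma vm_dot: "u \<bullet> ((w::real^_) v* K) = w \<bullet> (K *v u)" "((w::real^_) v* K) \<bullet> u = w \<bullet> (K *v u)"
  by (metis dot_lmul_matrix inner_commute)+

lemma neg_mult: "(- M) *v (v::real^_) = - (M *v v)"
  by (metis add.inverse_neutral diff_0 matrix_vector_mult_0 matrix_vector_mult_diff_rdistrib)

lemma quad_form:
  fixes A :: "real^'n1^'m" and B :: "real^'n2^'m" and d :: "real^'n2"
    and F :: "real^'k^'m" and i1 :: 'k and u :: "real^'k" and w :: "real^'m"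
  shows "vjoin u w \<bullet> ((lam *\<^sub>R outer (g1 i1) (g1 i1) - (1/2) *\<^sub>R Gmat A F i1 x + (1/2) *\<^sub>R Hmat B d i1 Y) *v vjoin u w)
    = lam * (u$i1)^2 - (u$i1) * (d \<bullet> (Y *v u)) + w \<bullet> ((u$i1) *\<^sub>R (A *v x) + B *v (Y *v u) - F *v u)"
proof -
  have g: "g1 i1 \<bullet> vjoin u w = u $ i1" "vjoin u w \<bullet> g1 i1 = u $ i1"
    by (simp_all add: g1_def inner_vjoin e1_def inner_axis' inner_axis)
  have e: "e1 i1 \<bullet> u = u $ i1" "u \<bullet> e1 i1 = u $ i1"
    by (simp_all add: e1_def inner_axis' inner_axis)
  have BY: "(B ** Y) *v u = B *v (Y *v u)" by (simp add: matrix_vector_mul_assoc)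
  have Qg: "vjoin u w \<bullet> (outer (g1 i1) (g1 i1) *v vjoin u w) = (u$i1)^2"
    by (simp add: outer_mult g power2_eq_square)
  have QG: "vjoin u w \<bullet> (Gmat A F i1 x *v vjoin u w) = 2 * (w \<bullet> (F *v u - (u$i1) *\<^sub>R (A *v x)))"
    unfolding Gmat_def blockmat_mult inner_vjoin
    by (simp add: vm_dot matrix_vector_mult_diff_rdistrib outer_mult e inner_diff_right)
  have QH: "vjoin u w \<bullet> (Hmat B d i1 Y *v vjoin u w) = -2 * (u$i1) * (d \<bullet> (Y *v u)) + 2 * (w \<bullet> (B *v (Y *v u)))"
    unfolding Hmat_def blockmat_mult inner_vjoin
    by (simp add: vm_dot matrix_vector_mult_diff_rdistrib outer_mult e inner_diff_right neg_mult BY inner_add_right inner_minus_right inner_scaleR_right vm_dot)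
  show ?thesis
    unfolding matrix_vector_mult_add_rdistrib matrix_vector_mult_diff_rdistrib
      scaleR_matrix_vector_assoc[symmetric] inner_add_right inner_diff_right inner_scaleR_right
      Qg QG QH
    by (simp add: inner_add_right inner_diff_right algebra_simps)
qed


lemma sym_M:
  fixes A :: "real^'n1^'m" and B :: "real^'n2^'m" and d :: "real^'n2"
    and F :: "real^'k^'m" and i1 :: 'k
  shows "transpose (lam *\<^sub>R outer (g1 i1) (g1 i1) - (1/2) *\<^sub>R Gmat A F i1 x + (1/2) *\<^sub>R Hmat B d i1 Y)
     = lam *\<^sub>R outer (g1 i1) (g1 i1) - (1/2) *\<^sub>R Gmat A F i1 x + (1/2) *\<^sub>R Hmat B d i1 Y"
  by (simp add: vec_eq_iff transpose_def Gmat_def Hmat_def blockmat_def outer_def g1_def vjoin_def transpose_matrix_vector[unfolded transpose_def]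
      split: sum.splits)

lemma zero_first:
  fixes Uh :: "(real^'k) set"
  assumes cvx: "convex Uh" and cone: "cone Uh" and ne: "Uset Uh i1 \<noteq> {}"
    and cpt: "compact (Uset Uh i1)" and u: "u \<in> Uh" and u1: "u $ i1 = 0"
  shows "u = 0"
proof (rule ccontr)
  assume nz: "u \<noteq> 0"
  obtain u0 where u0: "u0 \<in> Uset Uh i1" using ne by auto
  obtain b where b: "\<And>v. v \<in> Uset Uh i1 \<Longrightarrow> norm v \<le> b"
    using compact_imp_bounded[OF cpt] unfolding bounded_iff by auto
  have np: "norm u > 0" using nz by simp
  obtain n :: nat where n: "real n > (b + norm u0) / norm u" using reals_Archimedean2 by blast
  have add: "\<And>a c. a \<in> Uh \<Longrightarrow> c \<in> Uh \<Longrightarrow> a + c \<in> Uh"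
    using cvx cone convex_cone by blast
  have "real n *\<^sub>R u \<in> Uh" using cone u unfolding cone_def by auto
  hence "u0 + real n *\<^sub>R u \<in> Uh" using add u0 unfolding Uset_def by auto
  moreover have "(u0 + real n *\<^sub>R u) $ i1 = 1" using u0 u1 unfolding Uset_def by simp
  ultimately have "norm (u0 + real n *\<^sub>R u) \<le> b" using b unfolding Uset_def by auto
  moreover have "norm (real n *\<^sub>R u) \<le> norm (u0 + real n *\<^sub>R u) + norm u0"
    by (metis add.commute add_diff_cancel_left' norm_triangle_ineq4)
  ultimately have "real n * norm u \<le> b + norm u0" by simp
  moreover have "real n * norm u > b + norm u0" using n np by (simp add: field_simps)
  ultimately show False by simp
qed


lemma inner_nonneg_vec: "(\<forall>p. 0 \<le> (w::real^'m) $ p) \<Longrightarrow> (\<forall>p. 0 \<le> v $ p) \<Longrightarrow> 0 \<le> w \<bullet> v"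
  unfolding inner_vec_def by (auto intro!: sum_nonneg)

lemma feas_iff:
  fixes A :: "real^'n1^'m" and B :: "real^'n2^'m" and d :: "real^'n2"
    and F :: "real^'k^'m" and Uh :: "(real^'k) set" and i1 :: 'k
  assumes cvx: "convex Uh" and cone: "cone Uh" and ne: "Uset Uh i1 \<noteq> {}"
    and cpt: "compact (Uset Uh i1)" and nn: "\<forall>u\<in>Uh. 0 \<le> u $ i1"
  shows "(lam *\<^sub>R outer (g1 i1) (g1 i1) - (1/2) *\<^sub>R Gmat A F i1 x + (1/2) *\<^sub>R Hmat B d i1 Y
            \<in> COP (cone_prod_nonneg Uh)) \<longleftrightarrow>
    (\<forall>u\<in>Uset Uh i1. \<forall>p. (F *v u) $ p \<le> (A *v x + B *v (Y *v u)) $ p) \<and>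
    (\<forall>u\<in>Uset Uh i1. d \<bullet> (Y *v u) \<le> lam)"
  (is "?M \<in> _ \<longleftrightarrow> ?C1 \<and> ?C2")
proof
  assume H: "?M \<in> COP (cone_prod_nonneg Uh)"
  have Q: "\<And>u w. u \<in> Uh \<Longrightarrow> (\<forall>p. 0 \<le> w $ p) \<Longrightarrow>
      0 \<le> lam * (u$i1)^2 - (u$i1) * (d \<bullet> (Y *v u)) + w \<bullet> ((u$i1) *\<^sub>R (A *v x) + B *v (Y *v u) - F *v u)"
  proof -
    fix u w assume "u \<in> Uh" "\<forall>p. 0 \<le> (w::real^'m) $ p"
    hence "vjoin u w \<in> cone_prod_nonneg Uh" unfolding cone_prod_nonneg_def by auto
    with H have "0 \<le> vjoin u w \<bullet> (?M *v vjoin u w)" unfolding COP_def by blast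
    thus "0 \<le> lam * (u$i1)^2 - (u$i1) * (d \<bullet> (Y *v u)) + w \<bullet> ((u$i1) *\<^sub>R (A *v x) + B *v (Y *v u) - F *v u)"
      by (simp only: quad_form)
  qed
  have C2: ?C2
  proof
    fix u assume u: "u \<in> Uset Uh i1"
    from Q[of u 0] u show "d \<bullet> (Y *v u) \<le> lam" unfolding Uset_def by auto
  qed
  have C1: ?C1
  proof (intro ballI allI)
    fix u p assume u: "u \<in> Uset Uh i1"
    define v where "v = A *v x + B *v (Y *v u) - F *v u"
    define \<alpha> where "\<alpha> = lam - d \<bullet> (Y *v u)"
    show "(F *v u) $ p \<le> (A *v x + B *v (Y *v u)) $ p"
    proof (rule ccontr)
      assume "\<not> ?thesis"
      hence vp: "v $ p < 0" unfolding v_def by simp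
      define t where "t = (\<bar>\<alpha>\<bar> + 1) / (- v $ p)"
      have tpos: "t > 0" using vp unfolding t_def by (intro divide_pos_pos) auto
      have wnn: "\<forall>q. 0 \<le> (t *\<^sub>R axis p 1 :: real^'m) $ q" using tpos by (simp add: axis_def)
      from u have uU: "u \<in> Uh" "u $ i1 = 1" unfolding Uset_def by auto
      from Q[OF uU(1) wnn] uU(2) have "0 \<le> \<alpha> + (t *\<^sub>R axis p 1) \<bullet> v"
        unfolding v_def \<alpha>_def by simp
      also have "(t *\<^sub>R axis p 1) \<bullet> v = t * v $ p" by (simp add: inner_axis')
      also have "t * v $ p = - (\<bar>\<alpha>\<bar> + 1)" using vp unfolding t_def by simp
      finally show False by simp
    qed
  qed
  show "?C1 \<and> ?C2" using C1 C2 by blast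
next
  assume H: "?C1 \<and> ?C2"
  show "?M \<in> COP (cone_prod_nonneg Uh)"
    unfolding COP_def
  proof (intro CollectI conjI ballI)
    show "transpose ?M = ?M" by (rule sym_M)
  next
    fix z :: "real^('k+'m)" assume "z \<in> cone_prod_nonneg Uh"
    then obtain u and w :: "real^'m" where z: "z = vjoin u w" and u: "u \<in> Uh" and w: "\<forall>p. 0 \<le> w $ p"
      unfolding cone_prod_nonneg_def by auto
    show "0 \<le> z \<bullet> (?M *v z)"
    proof (cases "u $ i1 = 0")
      case True
      hence "u = 0" using zero_first[OF cvx cone ne cpt u] by simp
      thus ?thesis unfolding z quad_form by simp
    next
      case False
      define t where "t = u $ i1"
      have tpos: "t > 0" using False nn u unfolding t_def by force
      define u' where "u' = (1/t) *\<^sub>R u"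
      have u'U: "u' \<in> Uset Uh i1" using u tpos cone unfolding Uset_def u'_def cone_def t_def by auto
      have ueq: "u = t *\<^sub>R u'" using tpos unfolding u'_def by simp
      have u'1: "u' $ i1 = 1" using u'U unfolding Uset_def by simp
      define v where "v = A *v x + B *v (Y *v u') - F *v u'"
      have vnn: "\<forall>p. 0 \<le> v $ p" using H u'U unfolding v_def by auto
      have a1: "0 \<le> lam - d \<bullet> (Y *v u')" using H u'U by auto
      have "z \<bullet> (?M *v z) = t^2 * (lam - d \<bullet> (Y *v u')) + t * (w \<bullet> v)"
        unfolding z quad_form v_def
        by (simp add: ueq u'1 t_def[symmetric] matrix_vector_mult_scaleR inner_diff_right inner_add_right
            algebra_simps power2_eq_square)
      also have "\<dots> \<ge> 0" using tpos a1 inner_nonneg_vec[OF w vnn] by simp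
      finally show ?thesis .
    qed
  qed
qed


theorem proposition2:
  fixes A :: "real^'n1^'m" and B :: "real^'n2^'m" and c :: "real^'n1" and d :: "real^'n2"
    and F :: "real^'k^'m" and X :: "(real^'n1) set" and Uh :: "(real^'k) set" and i1 :: 'k
  assumes X_closed: "closed X" and X_convex: "convex X"
    and Uh_closed: "closed Uh" and Uh_convex: "convex Uh" and Uh_cone: "cone Uh"
    and Uh_full: "interior Uh \<noteq> {}"
    and Uh_first_nonneg: "\<forall>u\<in>Uh. 0 \<le> u $ i1"
    and U_nonempty: "Uset Uh i1 \<noteq> {}" and U_compact: "compact (Uset Uh i1)"
    and A2: "\<exists>x y. x \<in> X \<and> (\<forall>u\<in>Uset Uh i1. \<forall>p. (F *v u) $ p \<le> (A *v x + B *v y u) $ p)"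
    and A3: "\<bar>v_RLP A B c d F X Uh i1\<bar> \<noteq> \<infinity>"
  shows "v_AffCOP A B c d F X Uh i1 = v_Aff A B c d F X Uh i1"
proof (rule antisym)
  note FI = feas_iff[OF Uh_convex Uh_cone U_nonempty U_compact Uh_first_nonneg]
  show "v_Aff A B c d F X Uh i1 \<le> v_AffCOP A B c d F X Uh i1"
    unfolding v_AffCOP_def
  proof (rule INF_greatest)
    fix xlY assume "xlY \<in> {(x, lam, Y). x \<in> X \<and>
          lam *\<^sub>R outer (g1 i1) (g1 i1) - (1/2) *\<^sub>R Gmat A F i1 x + (1/2) *\<^sub>R Hmat B d i1 Y
            \<in> COP (cone_prod_nonneg Uh)}"
    then obtain x lam Y where e: "xlY = (x, lam, Y)" and x: "x \<in> X"
      and mem: "lam *\<^sub>R outer (g1 i1) (g1 i1) - (1/2) *\<^sub>R Gmat A F i1 x + (1/2) *\<^sub>R Hmat B d i1 Y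
            \<in> COP (cone_prod_nonneg Uh)"
      by blast
    have C1: "\<forall>u\<in>Uset Uh i1. \<forall>p. (F *v u) $ p \<le> (A *v x + B *v (Y *v u)) $ p"
      and C2: "\<forall>u\<in>Uset Uh i1. d \<bullet> (Y *v u) \<le> lam"
      using FI[THEN iffD1, OF mem] by blast+
    have "v_Aff A B c d F X Uh i1 \<le> ereal (c \<bullet> x) + (SUP u \<in> Uset Uh i1. ereal (d \<bullet> (Y *v u)))"
      unfolding v_Aff_def by (rule INF_lower2[of "(x, Y)"]) (use x C1 in \<open>blast, simp\<close>)
    also have "\<dots> \<le> ereal (c \<bullet> x) + ereal lam"
      by (intro add_left_mono SUP_least) (use C2 in simp)
    finally show "v_Aff A B c d F X Uh i1 \<le> ereal (c \<bullet> fst xlY + fst (snd xlY))"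
      using e by simp
  qed
  show "v_AffCOP A B c d F X Uh i1 \<le> v_Aff A B c d F X Uh i1"
    unfolding v_Aff_def
  proof (rule INF_greatest)
    fix xY assume "xY \<in> {(x, Y). x \<in> X \<and> (\<forall>u\<in>Uset Uh i1. \<forall>p. (F *v u) $ p \<le> (A *v x + B *v (Y *v u)) $ p)}"
    then obtain x Y where e: "xY = (x, Y)" and x: "x \<in> X"
      and C1: "\<forall>u\<in>Uset Uh i1. \<forall>p. (F *v u) $ p \<le> (A *v x + B *v (Y *v u)) $ p"
      by blast
    define S where "S = (SUP u \<in> Uset Uh i1. ereal (d \<bullet> (Y *v u)))"
    have eqf: "(\<lambda>u. d \<bullet> (Y *v u)) = (\<lambda>u. (d v* Y) \<bullet> u)" by (simp add: dot_lmul_matrix)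
    have "continuous_on (Uset Uh i1) (\<lambda>u. d \<bullet> (Y *v u))"
      unfolding eqf by (rule continuous_on_inner[OF continuous_on_const continuous_on_id])
    hence "compact ((\<lambda>u. d \<bullet> (Y *v u)) ` Uset Uh i1)"
      by (rule compact_continuous_image) (rule U_compact)
    hence "bounded ((\<lambda>u. d \<bullet> (Y *v u)) ` Uset Uh i1)" by (rule compact_imp_bounded)
    then obtain b where b0: "\<forall>y \<in> (\<lambda>u. d \<bullet> (Y *v u)) ` Uset Uh i1. \<bar>y\<bar> \<le> b"
      unfolding bounded_real by blast
    have b: "\<bar>d \<bullet> (Y *v u)\<bar> \<le> b" if "u \<in> Uset Uh i1" for u
      using b0 that by blast
    obtain u0 where u0: "u0 \<in> Uset Uh i1" using U_nonempty by auto
    have Sle: "S \<le> ereal b" unfolding S_def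
    proof (rule SUP_least)
      fix u assume "u \<in> Uset Uh i1"
      hence "d \<bullet> (Y *v u) \<le> b" using b abs_le_D1 by blast
      thus "ereal (d \<bullet> (Y *v u)) \<le> ereal b" by simp
    qed
    have Sge: "ereal (d \<bullet> (Y *v u0)) \<le> S" unfolding S_def by (rule SUP_upper) (rule u0)
    obtain s where s: "S = ereal s" using Sle Sge by (cases S) auto
    have C2: "\<forall>u\<in>Uset Uh i1. d \<bullet> (Y *v u) \<le> s"
    proof
      fix u assume "u \<in> Uset Uh i1"
      hence "ereal (d \<bullet> (Y *v u)) \<le> S" unfolding S_def by (rule SUP_upper)
      thus "d \<bullet> (Y *v u) \<le> s" using s by simp
    qed
    have "v_AffCOP A B c d F X Uh i1 \<le> ereal (c \<bullet> x + s)"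
      unfolding v_AffCOP_def by (rule INF_lower2[of "(x, s, Y)"]) (use x FI[THEN iffD2, OF conjI[OF C1 C2]] in \<open>blast, simp\<close>)
    also have "\<dots> = ereal (c \<bullet> fst xY) + (SUP u \<in> Uset Uh i1. ereal (d \<bullet> (snd xY *v u)))"
      using e s unfolding S_def by simp
    finally show "v_AffCOP A B c d F X Uh i1 \<le> ereal (c \<bullet> fst xY) + (SUP u \<in> Uset Uh i1. ereal (d \<bullet> (snd xY *v u)))" .
  qed
qed

end
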